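(* Let $x\in\widetilde W$, $v\in\mathrm{LP}(x)$ and $(\alpha,k)\in\Delta_{\mathrm{af}}$ with $\ell(x,\alpha)=0$. If $v^{-1}\alpha\in\Phi^+$, then $s_\alpha v\in\mathrm{LP}(x)$.
   Context: Let $\Phi$ be a reduced crystallographic finite root system with fixed basis $\Delta$, positive roots $\Phi^+$, negative roots $\Phi^-=-\Phi^+$, Weyl group $W$. For $\alpha\in\Phi$, $\alpha^\vee$ is its coroot and $s_\alpha$ its reflection. Let $X_*$ be an abelian group containing $\mathbb Z\Phi^\vee$, with a bilinear pairing $\langle\cdot,\cdot\rangle:X_*\times\mathbb Z\Phi\to\mathbb Z$ extending the coroot–root pairing; $W$ acts by $s_\alpha(\mu)=\mu-\langle\mu,\alpha\rangle\alpha^\vee$. $\Phi^+(\alpha)=1$ if $\alpha\in\Phi^+$, $0$ otherwise. $\widetilde W=W\ltimes X_*$ with elements $w\varepsilon^\mu$. The set of simple affine roots is $\Delta_{\mathrm{af}}=\{(\alpha,0):\alpha\in\Delta\}\cup\{(-\theta,1):\theta\text{ the highest root of an irreducible component of }\Phi\}$. For $x=w\varepsilon^\mu$ and $\alpha\in\Phi$, $\ell(x,\alpha)=\langle\mu,\alpha\rangle+\Phi^+(\alpha)-\Phi^+(w\alpha)$, and $\mathrm{LP}(x)=\{v\in W:\ell(x,v\alpha)\ge0\ \forall\alpha\in\Phi^+\}$. *)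

theory Defs
  imports "HOL-Analysis.Analysis"
begin

definition refl :: "'v::real_inner \<Rightarrow> 'v \<Rightarrow> 'v" where
  "refl \<alpha> \<beta> = \<beta> - (2 * (\<beta> \<bullet> \<alpha>) / (\<alpha> \<bullet> \<alpha>)) *\<^sub>R \<alpha>"

definition cpair :: "'v::real_inner \<Rightarrow> 'v \<Rightarrow> real" where
  "cpair \<alpha> \<beta> = 2 * (\<beta> \<bullet> \<alpha>) / (\<alpha> \<bullet> \<alpha>)"

definition coroot :: "'v::real_inner \<Rightarrow> 'v" where
  "coroot \<alpha> = (2 / (\<alpha> \<bullet> \<alpha>)) *\<^sub>R \<alpha>"

definition root_system :: "'v::real_inner set \<Rightarrow> bool" where
  "root_system \<Phi> \<longleftrightarrow> finite \<Phi> \<and> 0 \<notin> \<Phi>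
     \<and> (\<forall>\<alpha>\<in>\<Phi>. refl \<alpha> ` \<Phi> = \<Phi>)
     \<and> (\<forall>\<alpha>\<in>\<Phi>. \<forall>\<beta>\<in>\<Phi>. cpair \<alpha> \<beta> \<in> \<int>)
     \<and> (\<forall>\<alpha>\<in>\<Phi>. \<forall>c::real. c *\<^sub>R \<alpha> \<in> \<Phi> \<longrightarrow> c = 1 \<or> c = -1)"

definition zspan :: "'v::real_vector set \<Rightarrow> 'v set" where
  "zspan S = {(\<Sum>s\<in>F. of_int (c s) *\<^sub>R s) | F c. finite F \<and> F \<subseteq> S}"

definition nonneg_comb :: "'v::real_vector set \<Rightarrow> 'v \<Rightarrow> bool" where
  "nonneg_comb \<Delta> \<beta> \<longleftrightarrow> (\<exists>c::'v \<Rightarrow> int. (\<forall>\<delta>\<in>\<Delta>. c \<delta> \<ge> 0) \<and> \<beta> = (\<Sum>\<delta>\<in>\<Delta>. of_int (c \<delta>) *\<^sub>R \<delta>))"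

definition is_basis :: "'v::real_inner set \<Rightarrow> 'v set \<Rightarrow> bool" where
  "is_basis \<Phi> \<Delta> \<longleftrightarrow> \<Delta> \<subseteq> \<Phi> \<and> independent \<Delta>
     \<and> (\<forall>\<beta>\<in>\<Phi>. nonneg_comb \<Delta> \<beta> \<or> nonneg_comb \<Delta> (-\<beta>))"

definition pos_roots :: "'v::real_inner set \<Rightarrow> 'v set \<Rightarrow> 'v set" where
  "pos_roots \<Phi> \<Delta> = {\<beta>\<in>\<Phi>. nonneg_comb \<Delta> \<beta>}"

text \<open>irreducible components: classes of the transitive closure of non-orthogonality\<close>
definition nonorth :: "'v::real_inner set \<Rightarrow> ('v \<times> 'v) set" where
  "nonorth \<Phi> = {(\<alpha>, \<beta>). \<alpha> \<in> \<Phi> \<and> \<beta> \<in> \<Phi> \<and> \<alpha> \<bullet> \<beta> \<noteq> 0}"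

definition components :: "'v::real_inner set \<Rightarrow> 'v set set" where
  "components \<Phi> = {(nonorth \<Phi>)\<^sup>* `` {\<alpha>} | \<alpha>. \<alpha> \<in> \<Phi>}"

definition highest_root :: "'v::real_inner set \<Rightarrow> 'v set \<Rightarrow> 'v \<Rightarrow> bool" where
  "highest_root \<Phi> \<Delta> \<theta> \<longleftrightarrow>
     (\<exists>C\<in>components \<Phi>. \<theta> \<in> C \<and> (\<forall>\<beta>\<in>C. nonneg_comb \<Delta> (\<theta> - \<beta>)))"

definition aff_simple :: "'v::real_inner set \<Rightarrow> 'v set \<Rightarrow> ('v \<times> int) set" where
  "aff_simple \<Phi> \<Delta> = {(\<alpha>, 0) | \<alpha>. \<alpha> \<in> \<Delta>} \<union> {(-\<theta>, 1) | \<theta>. highest_root \<Phi> \<Delta> \<theta>}"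

inductive_set weyl_group :: "'v::real_inner set \<Rightarrow> ('v \<Rightarrow> 'v) set" for \<Phi> where
  weyl_id: "id \<in> weyl_group \<Phi>"
| weyl_step: "w \<in> weyl_group \<Phi> \<Longrightarrow> \<alpha> \<in> \<Phi> \<Longrightarrow> refl \<alpha> \<circ> w \<in> weyl_group \<Phi>"

text \<open>Cocharacter data: abelian group 'x with an injective additive map emb from the
  coroot lattice into it and a bilinear pairing with the root lattice extending the
  coroot-root pairing.\<close>
definition cochar_data :: "'v::real_inner set \<Rightarrow> ('v \<Rightarrow> 'x::ab_group_add) \<Rightarrow> ('x \<Rightarrow> 'v \<Rightarrow> int) \<Rightarrow> bool" where
  "cochar_data \<Phi> emb pair \<longleftrightarrow>
     (\<forall>a\<in>zspan (coroot ` \<Phi>). \<forall>b\<in>zspan (coroot ` \<Phi>). emb (a + b) = emb a + emb b)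
   \<and> inj_on emb (zspan (coroot ` \<Phi>))
   \<and> (\<forall>\<mu> \<nu> \<beta>. pair (\<mu> + \<nu>) \<beta> = pair \<mu> \<beta> + pair \<nu> \<beta>)
   \<and> (\<forall>\<mu>. \<forall>\<beta>\<in>zspan \<Phi>. \<forall>\<gamma>\<in>zspan \<Phi>. pair \<mu> (\<beta> + \<gamma>) = pair \<mu> \<beta> + pair \<mu> \<gamma>)
   \<and> (\<forall>\<alpha>\<in>\<Phi>. \<forall>\<beta>\<in>\<Phi>. real_of_int (pair (emb (coroot \<alpha>)) \<beta>) = cpair \<alpha> \<beta>)"

text \<open>Elements of the extended affine Weyl group W semidirect X_* are pairs (w, mu) with w in W,
  standing for w eps^mu.  ell x alpha = <mu,alpha> + Phi+(alpha) - Phi+(w alpha).\<close>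
definition ell :: "('x \<Rightarrow> 'v \<Rightarrow> int) \<Rightarrow> 'v::real_inner set \<Rightarrow> 'v set \<Rightarrow> ('v \<Rightarrow> 'v) \<times> 'x \<Rightarrow> 'v \<Rightarrow> int" where
  "ell pair \<Phi> \<Delta> x \<alpha> = (case x of (w, \<mu>) \<Rightarrow>
     pair \<mu> \<alpha> + (if \<alpha> \<in> pos_roots \<Phi> \<Delta> then 1 else 0) - (if w \<alpha> \<in> pos_roots \<Phi> \<Delta> then 1 else 0))"

definition LP :: "('x \<Rightarrow> 'v \<Rightarrow> int) \<Rightarrow> 'v::real_inner set \<Rightarrow> 'v set \<Rightarrow> ('v \<Rightarrow> 'v) \<times> 'x \<Rightarrow> ('v \<Rightarrow> 'v) set" where
  "LP pair \<Phi> \<Delta> x = {v \<in> weyl_group \<Phi>. \<forall>\<alpha>\<in>pos_roots \<Phi> \<Delta>. ell pair \<Phi> \<Delta> x (v \<alpha>) \<ge> 0}"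

end

theory Submission imports Defs begin

lemma refl_cpair: "refl a b = b - cpair a b *\<^sub>R a"
  by (simp add: refl_def cpair_def)

lemma refl_linear: "linear (refl a)"
  by (rule linearI) (auto simp: refl_def inner_add_left add_divide_distrib algebra_simps scaleR_add_left)

lemma refl_refl: "a \<noteq> 0 \<Longrightarrow> refl a (refl a x) = x"
  by (simp add: refl_def inner_diff_left algebra_simps)

lemma refl_bij: "a \<noteq> 0 \<Longrightarrow> bij (refl a)"
  by (metis bij_betw_byWitness refl_refl subset_UNIV image_subset_iff UNIV_I)

lemma weyl_props:
  assumes "w \<in> weyl_group \<Phi>" "root_system \<Phi>"
  shows "linear w \<and> bij w \<and> (\<forall>\<beta>\<in>\<Phi>. w \<beta> \<in> \<Phi>)"
  using assms(1)
proof induction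
  case weyl_id
  then show ?case using linear_id bij_id by (simp add: id_def)
next
  case (weyl_step w \<alpha>)
  have a0: "\<alpha> \<noteq> 0" "refl \<alpha> ` \<Phi> = \<Phi>" using assms(2) weyl_step(2) unfolding root_system_def by auto
  have "linear (refl \<alpha> \<circ> w)" using weyl_step(3) by (intro linear_compose refl_linear) auto
  moreover have "bij (refl \<alpha> \<circ> w)" using weyl_step(3) a0 by (intro bij_comp refl_bij) auto
  moreover have "\<forall>\<beta>\<in>\<Phi>. (refl \<alpha> \<circ> w) \<beta> \<in> \<Phi>" using weyl_step(3) a0 by auto
  ultimately show ?case by blast
qed

lemma indep_zero:
  assumes "finite D" "independent D" "(\<Sum>\<delta>\<in>D. u \<delta> *\<^sub>R \<delta>) = 0" "x \<in> D"
  shows "u x = 0"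
  using assms real_vector.dependent_finite[OF assms(1)] by blast

lemma indep_unique:
  assumes "finite D" "independent D"
    "(\<Sum>\<delta>\<in>D. of_int (a \<delta>) *\<^sub>R \<delta>) = (\<Sum>\<delta>\<in>D. of_int (b \<delta>) *\<^sub>R (\<delta>::'v::real_vector))" "x \<in> D"
  shows "a x = b x"
proof -
  have "(\<Sum>\<delta>\<in>D. real_of_int (a \<delta> - b \<delta>) *\<^sub>R \<delta>) = 0"
    using assms(3) by (simp add: scaleR_diff_left sum_subtractf)
  from indep_zero[OF assms(1,2) this assms(4)] show ?thesis by simp
qed

lemma nc_add: "nonneg_comb D a \<Longrightarrow> nonneg_comb D b \<Longrightarrow> nonneg_comb D (a + b)"
  unfolding nonneg_comb_def
  apply (elim exE conjE)
  subgoal for c d by (rule exI[of _ "\<lambda>x. c x + d x"]) (auto simp: scaleR_add_left sum.distrib)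
  done

lemma nc_scale: "nonneg_comb D a \<Longrightarrow> k \<ge> 0 \<Longrightarrow> nonneg_comb D (of_int k *\<^sub>R a)"
  unfolding nonneg_comb_def
  apply (elim exE conjE)
  subgoal for c by (rule exI[of _ "\<lambda>x. k * c x"]) (auto simp: scaleR_sum_right)
  done

lemma nc_zero: "nonneg_comb D 0"
  unfolding nonneg_comb_def by (rule exI[of _ "\<lambda>x. 0"]) auto

lemma nc_simple: "finite D \<Longrightarrow> d \<in> D \<Longrightarrow> nonneg_comb D d"
  unfolding nonneg_comb_def
proof (rule exI[of _ "\<lambda>x. if x = d then 1 else 0"], intro conjI)
  assume "finite D" "d \<in> D"
  have "(\<Sum>\<delta>\<in>D. real_of_int (if \<delta> = d then 1 else 0) *\<^sub>R \<delta>) = (\<Sum>\<delta>\<in>D. if \<delta> = d then \<delta> else 0)"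
    by (rule sum.cong) auto
  also have "\<dots> = d" using \<open>finite D\<close> \<open>d \<in> D\<close> by (simp add: sum.delta')
  finally show "d = (\<Sum>\<delta>\<in>D. real_of_int (if \<delta> = d then 1 else 0) *\<^sub>R \<delta>)" by simp
qed auto

lemma nc_antisym:
  assumes "finite D" "independent D" "nonneg_comb D x" "nonneg_comb D (-x)"
  shows "x = 0"
proof -
  obtain c where c: "\<forall>\<delta>\<in>D. c \<delta> \<ge> 0" "x = (\<Sum>\<delta>\<in>D. of_int (c \<delta>) *\<^sub>R \<delta>)"
    using assms(3) unfolding nonneg_comb_def by blast
  obtain d where d: "\<forall>\<delta>\<in>D. d \<delta> \<ge> 0" "-x = (\<Sum>\<delta>\<in>D. of_int (d \<delta>) *\<^sub>R \<delta>)"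
    using assms(4) unfolding nonneg_comb_def by blast
  have "(\<Sum>\<delta>\<in>D. real_of_int (c \<delta> + d \<delta>) *\<^sub>R \<delta>) = 0"
    using c(2) d(2) by (simp add: scaleR_add_left sum.distrib) (metis add.right_inverse)
  hence "\<forall>\<delta>\<in>D. real_of_int (c \<delta> + d \<delta>) = 0" using indep_zero[OF assms(1,2), of "\<lambda>\<delta>. real_of_int (c \<delta> + d \<delta>)"] by blast
  hence "\<forall>\<delta>\<in>D. c \<delta> = 0" using c(1) d(1) by fastforce
  thus ?thesis using c(2) by simp
qed

lemma zspan_single: "\<beta> \<in> S \<Longrightarrow> of_int n *\<^sub>R \<beta> \<in> zspan S"
  unfolding zspan_def by (rule CollectI, rule exI[of _ "{\<beta>}"], rule exI[of _ "\<lambda>_. n"]) auto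

lemma zspan_mem: "\<beta> \<in> S \<Longrightarrow> \<beta> \<in> zspan S"
  using zspan_single[of \<beta> S 1] by simp

lemma zspan_zero: "0 \<in> zspan S"
  unfolding zspan_def by (rule CollectI, rule exI[of _ "{}"]) auto

lemma int_hom:
  fixes p :: "'v::real_vector \<Rightarrow> int"
  assumes add: "\<And>a b. a \<in> Z \<Longrightarrow> b \<in> Z \<Longrightarrow> p (a + b) = p a + p b"
   and sing: "\<And>n. of_int n *\<^sub>R b \<in> Z" and z0: "0 \<in> Z"
  shows "p (of_int n *\<^sub>R b) = n * p b"
proof -
  have z: "p 0 = 0" using add[OF z0 z0] by simp
  have nat: "p (of_nat k *\<^sub>R b) = int k * p b" for k :: nat
  proof (induction k)
    case 0 then show ?case using z by simp
  next
    case (Suc k)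
    have e: "of_nat (Suc k) *\<^sub>R b = of_int (int k) *\<^sub>R b + of_int 1 *\<^sub>R b" by (simp add: scaleR_add_left)
    have "p (of_int (int k) *\<^sub>R b + of_int 1 *\<^sub>R b) = p (of_int (int k) *\<^sub>R b) + p (of_int 1 *\<^sub>R b)"
      using add[OF sing sing] .
    then show ?case using Suc e by (simp add: distrib_right)
  qed
  show ?thesis
  proof (cases "n \<ge> 0")
    case True
    then obtain k where "n = int k" by (metis nonneg_eq_int)
    then show ?thesis using nat[of k] by simp
  next
    case False
    then obtain k where k: "n = - int k" using that[of "nat (-n)"] by simp
    have e: "of_int (int k) *\<^sub>R b + of_int (- int k) *\<^sub>R b = 0" by (simp add: scaleR_add_left[symmetric])
    have "p (of_int (int k) *\<^sub>R b + of_int (- int k) *\<^sub>R b) = p (of_int (int k) *\<^sub>R b) + p (of_int (- int k) *\<^sub>R b)"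
      using add[OF sing sing] .
    hence "0 = int k * p b + p (of_int (- int k) *\<^sub>R b)" using z nat[of k] e by simp
    then show ?thesis using k by simp
  qed
qed

context
  fixes \<Phi> \<Delta> :: "'v::real_inner set" and emb :: "'v \<Rightarrow> 'x::ab_group_add" and pair :: "'x \<Rightarrow> 'v \<Rightarrow> int"
  assumes RS: "root_system \<Phi>" and B: "is_basis \<Phi> \<Delta>" and CD: "cochar_data \<Phi> emb pair"
begin

lemma fin: "finite \<Phi>" using RS unfolding root_system_def by auto
lemma zero_not: "0 \<notin> \<Phi>" using RS unfolding root_system_def by auto
lemma refl_in: "\<alpha> \<in> \<Phi> \<Longrightarrow> \<beta> \<in> \<Phi> \<Longrightarrow> refl \<alpha> \<beta> \<in> \<Phi>" using RS unfolding root_system_def by blast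
lemma cpair_int: "\<alpha> \<in> \<Phi> \<Longrightarrow> \<beta> \<in> \<Phi> \<Longrightarrow> \<exists>n::int. cpair \<alpha> \<beta> = of_int n"
  using RS unfolding root_system_def by (meson Ints_cases)
lemma reduced: "\<alpha> \<in> \<Phi> \<Longrightarrow> c *\<^sub>R \<alpha> \<in> \<Phi> \<Longrightarrow> c = 1 \<or> c = -1"
  using RS unfolding root_system_def by blast
lemma DsubP: "\<Delta> \<subseteq> \<Phi>" using B unfolding is_basis_def by auto
lemma finD: "finite \<Delta>" using fin DsubP finite_subset by blast
lemma indD: "independent \<Delta>" using B unfolding is_basis_def by auto
lemma basis_cases: "\<beta> \<in> \<Phi> \<Longrightarrow> nonneg_comb \<Delta> \<beta> \<or> nonneg_comb \<Delta> (-\<beta>)"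
  using B unfolding is_basis_def by auto
lemma antisym: "nonneg_comb \<Delta> x \<Longrightarrow> nonneg_comb \<Delta> (-x) \<Longrightarrow> x = 0"
  using nc_antisym[OF finD indD] by blast

lemma neg_in: "\<beta> \<in> \<Phi> \<Longrightarrow> -\<beta> \<in> \<Phi>"
proof -
  assume b: "\<beta> \<in> \<Phi>"
  hence "\<beta> \<noteq> 0" using zero_not by auto
  hence "refl \<beta> \<beta> = -\<beta>" unfolding refl_def by (simp add: scaleR_2)
  thus ?thesis using refl_in[OF b b] by simp
qed

lemma pos_iff: "\<beta> \<in> \<Phi> \<Longrightarrow> (-\<beta> \<in> pos_roots \<Phi> \<Delta>) \<longleftrightarrow> \<not> (\<beta> \<in> pos_roots \<Phi> \<Delta>)"
  unfolding pos_roots_def using basis_cases antisym zero_not neg_in by fastforce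

lemma N_add: "a \<in> \<Phi> \<Longrightarrow> b \<in> \<Phi> \<Longrightarrow> pair \<mu> (a + b) = pair \<mu> a + pair \<mu> b"
  using CD zspan_mem unfolding cochar_data_def by blast

lemma N_mult: "\<beta> \<in> \<Phi> \<Longrightarrow> pair \<mu> (of_int n *\<^sub>R \<beta>) = n * pair \<mu> \<beta>"
  by (rule int_hom[where Z="zspan \<Phi>"]) (use CD in \<open>auto simp: cochar_data_def intro: zspan_single zspan_zero\<close>)

lemma N_neg: "\<beta> \<in> \<Phi> \<Longrightarrow> pair \<mu> (-\<beta>) = - pair \<mu> \<beta>"
  using N_mult[of \<beta> \<mu> "-1"] by simp


lemma ell_eq: "ell pair \<Phi> \<Delta> (w,\<mu>) \<gamma> = pair \<mu> \<gamma> + (if \<gamma> \<in> pos_roots \<Phi> \<Delta> then 1 else 0) - (if w \<gamma> \<in> pos_roots \<Phi> \<Delta> then 1 else 0)"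
  by (simp add: ell_def)

lemma w_pos_add:
  assumes w: "w \<in> weyl_group \<Phi>" and g: "\<gamma> \<in> \<Phi>" and eq: "\<gamma> = a + of_int k *\<^sub>R b" and k: "k \<ge> 0"
    and a: "w a \<in> pos_roots \<Phi> \<Delta>" and b: "w b \<in> pos_roots \<Phi> \<Delta>"
  shows "w \<gamma> \<in> pos_roots \<Phi> \<Delta>"
proof -
  have wp: "linear w" "\<forall>\<beta>\<in>\<Phi>. w \<beta> \<in> \<Phi>" using weyl_props[OF w RS] by auto
  have "w \<gamma> = w a + of_int k *\<^sub>R w b" using eq wp(1) by (simp add: linear_add linear_scale)
  moreover have "nonneg_comb \<Delta> (w a + of_int k *\<^sub>R w b)"
    using a b k by (intro nc_add nc_scale) (auto simp: pos_roots_def)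
  moreover have "w \<gamma> \<in> \<Phi>" using wp(2) g by blast
  ultimately show ?thesis by (simp add: pos_roots_def)
qed

lemma ell_neg:
  assumes w: "w \<in> weyl_group \<Phi>" and b: "\<beta> \<in> \<Phi>"
  shows "ell pair \<Phi> \<Delta> (w,\<mu>) (-\<beta>) = - ell pair \<Phi> \<Delta> (w,\<mu>) \<beta>"
proof -
  have wp: "linear w" "\<forall>\<beta>\<in>\<Phi>. w \<beta> \<in> \<Phi>" using weyl_props[OF w RS] by auto
  have "w (-\<beta>) = - w \<beta>" using wp(1) by (simp add: linear_neg)
  moreover have "w \<beta> \<in> \<Phi>" using wp b by auto
  ultimately show ?thesis using pos_iff[OF b] pos_iff[of "w \<beta>"] N_neg[OF b, of \<mu>]
    by (simp add: ell_eq)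
qed

lemma S1:
  assumes d: "\<delta> \<in> \<Delta>" and g: "\<gamma> \<in> \<Phi>" and n1: "nonneg_comb \<Delta> \<gamma>"
    and n2: "nonneg_comb \<Delta> (of_int n *\<^sub>R \<delta> - \<gamma>)"
  shows "\<gamma> = \<delta>"
proof -
  obtain c where c: "\<forall>x\<in>\<Delta>. c x \<ge> 0" "\<gamma> = (\<Sum>x\<in>\<Delta>. of_int (c x) *\<^sub>R x)"
    using n1 unfolding nonneg_comb_def by blast
  obtain e where e: "\<forall>x\<in>\<Delta>. e x \<ge> 0" "of_int n *\<^sub>R \<delta> - \<gamma> = (\<Sum>x\<in>\<Delta>. of_int (e x) *\<^sub>R x)"
    using n2 unfolding nonneg_comb_def by blast
  have s1: "(\<Sum>x\<in>\<Delta>. of_int (c x + e x) *\<^sub>R x) = of_int n *\<^sub>R \<delta>"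
    using c(2) e(2) by (simp add: scaleR_add_left sum.distrib) (metis add_diff_cancel_left' diff_add_cancel)
  have s2: "(\<Sum>x\<in>\<Delta>. of_int (if x = \<delta> then n else 0) *\<^sub>R x) = of_int n *\<^sub>R \<delta>"
  proof -
    have "(\<Sum>x\<in>\<Delta>. of_int (if x = \<delta> then n else 0) *\<^sub>R x) = (\<Sum>x\<in>\<Delta>. if x = \<delta> then of_int n *\<^sub>R x else 0)"
      by (rule sum.cong) auto
    also have "\<dots> = of_int n *\<^sub>R \<delta>" using finD d by (simp add: sum.delta')
    finally show ?thesis .
  qed
  have ce: "c x + e x = (if x = \<delta> then n else 0)" if "x \<in> \<Delta>" for x
    using indep_unique[OF finD indD _ that, of "\<lambda>x. c x + e x" "\<lambda>x. if x = \<delta> then n else 0"] s1 s2 by simp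
  have c0: "c x = 0" if "x \<in> \<Delta>" "x \<noteq> \<delta>" for x
    using ce[OF that(1)] that c(1) e(1) by fastforce
  have "\<gamma> = (\<Sum>x\<in>\<Delta>. if x = \<delta> then of_int (c \<delta>) *\<^sub>R x else 0)"
    unfolding c(2) by (rule sum.cong) (auto simp: c0)
  also have "\<dots> = of_int (c \<delta>) *\<^sub>R \<delta>" using finD d by (simp add: sum.delta')
  finally have gd: "\<gamma> = of_int (c \<delta>) *\<^sub>R \<delta>" .
  have dP: "\<delta> \<in> \<Phi>" using d DsubP by auto
  have "real_of_int (c \<delta>) = 1 \<or> real_of_int (c \<delta>) = -1" using reduced[OF dP, of "real_of_int (c \<delta>)"] g gd by blast
  moreover have "\<gamma> \<noteq> -\<delta>"
  proof
    assume "\<gamma> = -\<delta>"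
    hence "\<delta> = 0" using antisym[of \<delta>] nc_simple[OF finD d] n1 by simp
    thus False using dP zero_not by simp
  qed
  ultimately show ?thesis using gd by auto
qed


lemma N_add_z: "a \<in> zspan \<Phi> \<Longrightarrow> b \<in> zspan \<Phi> \<Longrightarrow> pair \<mu> (a + b) = pair \<mu> a + pair \<mu> b"
  using CD unfolding cochar_data_def by blast

lemma mono_simple:
  assumes w: "w \<in> weyl_group \<Phi>" and d: "\<delta> \<in> \<Delta>" and l0: "ell pair \<Phi> \<Delta> (w,\<mu>) \<delta> = 0"
    and g: "\<gamma> \<in> \<Phi>" and ne: "\<gamma> \<noteq> \<delta>" and cn: "cpair \<delta> \<gamma> = of_int n" and n1: "n \<ge> 1"
  shows "ell pair \<Phi> \<Delta> (w,\<mu>) \<gamma> \<le> ell pair \<Phi> \<Delta> (w,\<mu>) (refl \<delta> \<gamma>)"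
proof -
  define s where "s = refl \<delta> \<gamma>"
  have dP: "\<delta> \<in> \<Phi>" using d DsubP by auto
  have s_eq: "s = \<gamma> - of_int n *\<^sub>R \<delta>" unfolding s_def refl_cpair cn ..
  have sP: "s \<in> \<Phi>" unfolding s_def using refl_in[OF dP g] .
  have dpos: "\<delta> \<in> pos_roots \<Phi> \<Delta>" using nc_simple[OF finD d] dP by (simp add: pos_roots_def)
  have chi: "(s \<in> pos_roots \<Phi> \<Delta>) = (\<gamma> \<in> pos_roots \<Phi> \<Delta>)"
  proof
    assume sp: "s \<in> pos_roots \<Phi> \<Delta>"
    show "\<gamma> \<in> pos_roots \<Phi> \<Delta>"
    proof (rule ccontr)
      assume "\<gamma> \<notin> pos_roots \<Phi> \<Delta>"
      hence "nonneg_comb \<Delta> (-\<gamma>)" using pos_iff[OF g] by (simp add: pos_roots_def)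
      hence "nonneg_comb \<Delta> (-\<gamma> + of_int n *\<^sub>R \<delta>)"
        using n1 nc_simple[OF finD d] by (intro nc_add nc_scale) auto
      moreover have "-\<gamma> + of_int n *\<^sub>R \<delta> = - s" using s_eq by simp
      ultimately have "s = 0" using antisym sp by (simp add: pos_roots_def)
      thus False using sP zero_not by simp
    qed
  next
    assume gp: "\<gamma> \<in> pos_roots \<Phi> \<Delta>"
    show "s \<in> pos_roots \<Phi> \<Delta>"
    proof (rule ccontr)
      assume "s \<notin> pos_roots \<Phi> \<Delta>"
      hence "nonneg_comb \<Delta> (-s)" using pos_iff[OF sP] by (simp add: pos_roots_def)
      moreover have "-s = of_int n *\<^sub>R \<delta> - \<gamma>" using s_eq by simp
      ultimately have "\<gamma> = \<delta>" using S1[OF d g] gp by (simp add: pos_roots_def)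
      thus False using ne by simp
    qed
  qed
  have N: "pair \<mu> \<gamma> = pair \<mu> s + n * pair \<mu> \<delta>"
  proof -
    have "\<gamma> = s + of_int n *\<^sub>R \<delta>" using s_eq by simp
    hence "pair \<mu> \<gamma> = pair \<mu> s + pair \<mu> (of_int n *\<^sub>R \<delta>)"
      using N_add_z[OF zspan_mem[OF sP] zspan_single[OF dP]] by simp
    thus ?thesis using N_mult[OF dP] by simp
  qed
  have chi': "w \<delta> \<in> pos_roots \<Phi> \<Delta> \<Longrightarrow> w s \<in> pos_roots \<Phi> \<Delta> \<Longrightarrow> w \<gamma> \<in> pos_roots \<Phi> \<Delta>"
    using w_pos_add[OF w g, of s n \<delta>] s_eq n1 by simp
  have L: "pair \<mu> \<delta> + 1 - (if w \<delta> \<in> pos_roots \<Phi> \<Delta> then 1 else 0) = 0"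
    using l0 dpos by (simp add: ell_eq)
  show ?thesis
  proof (cases "w \<delta> \<in> pos_roots \<Phi> \<Delta>")
    case True
    then have "pair \<mu> \<delta> = 0" using L by simp
    then show ?thesis unfolding s_def[symmetric] using True chi chi' N by (auto simp: ell_eq)
  next
    case False
    then have "pair \<mu> \<delta> = -1" using L by simp
    then show ?thesis unfolding s_def[symmetric] using False chi N n1 by (auto simp: ell_eq)
  qed
qed


lemma mono_theta:
  assumes w: "w \<in> weyl_group \<Phi>" and h: "highest_root \<Phi> \<Delta> \<theta>" and l0: "ell pair \<Phi> \<Delta> (w,\<mu>) (-\<theta>) = 0"
    and g: "\<gamma> \<in> \<Phi>" and ne: "\<gamma> \<noteq> -\<theta>" and cn: "cpair (-\<theta>) \<gamma> = of_int n" and n1: "n \<ge> 1"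
  shows "ell pair \<Phi> \<Delta> (w,\<mu>) \<gamma> \<le> ell pair \<Phi> \<Delta> (w,\<mu>) (refl (-\<theta>) \<gamma>)"
proof -
  obtain C where CC: "C \<in> components \<Phi>" and tC: "\<theta> \<in> C" and hi: "\<And>\<beta>. \<beta> \<in> C \<Longrightarrow> nonneg_comb \<Delta> (\<theta> - \<beta>)"
    using h unfolding highest_root_def by blast
  obtain a where aP: "a \<in> \<Phi>" and Ca: "C = (nonorth \<Phi>)\<^sup>* `` {a}"
    using CC unfolding components_def by blast
  have Csub: "x \<in> \<Phi>" if "x \<in> C" for x
  proof -
    have "(a, x) \<in> (nonorth \<Phi>)\<^sup>*" using that Ca by blast
    thus ?thesis
      by (cases rule: rtranclE) (use aP in \<open>auto simp: nonorth_def\<close>)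
  qed
  have Cstep: "y \<in> C" if "y \<in> \<Phi>" "\<theta> \<bullet> y \<noteq> 0" for y
  proof -
    have "(a, \<theta>) \<in> (nonorth \<Phi>)\<^sup>*" using tC Ca by blast
    moreover have "(\<theta>, y) \<in> nonorth \<Phi>" using that Csub[OF tC] by (simp add: nonorth_def)
    ultimately have "(a, y) \<in> (nonorth \<Phi>)\<^sup>*" by (rule rtrancl_into_rtrancl)
    thus ?thesis using Ca by blast
  qed
  have tP: "\<theta> \<in> \<Phi>" using Csub[OF tC] .
  have t0: "\<theta> \<noteq> 0" using tP zero_not by auto
  have tt: "\<theta> \<bullet> \<theta> > 0" using t0 by simp
  have mtP: "-\<theta> \<in> \<Phi>" using neg_in[OF tP] .
  have mtC: "-\<theta> \<in> C" using Cstep[OF mtP] tt by simp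
  have tpos: "nonneg_comb \<Delta> \<theta>"
  proof (rule ccontr)
    assume "\<not> nonneg_comb \<Delta> \<theta>"
    hence "nonneg_comb \<Delta> (-\<theta>)" using basis_cases[OF tP] by blast
    hence "nonneg_comb \<Delta> (of_int 2 *\<^sub>R (-\<theta>))" by (rule nc_scale) simp
    moreover have "of_int 2 *\<^sub>R (-\<theta>) = - (\<theta> - -\<theta>)" by (simp add: scaleR_2)
    ultimately have "\<theta> - -\<theta> = 0" using antisym hi[OF mtC] by simp
    hence "\<theta> = 0" by (simp add: scaleR_2[symmetric])
    thus False using t0 by simp
  qed
  have tpr: "\<theta> \<in> pos_roots \<Phi> \<Delta>" using tpos tP by (simp add: pos_roots_def)
  have mtnp: "-\<theta> \<notin> pos_roots \<Phi> \<Delta>" using pos_iff[OF tP] tpr by simp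
  define s where "s = refl (-\<theta>) \<gamma>"
  have s_eq: "s = \<gamma> + of_int n *\<^sub>R \<theta>" unfolding s_def refl_cpair cn by simp
  have sP: "s \<in> \<Phi>" unfolding s_def using refl_in[OF mtP g] .
  have nrel: "of_int n * (\<theta> \<bullet> \<theta>) = - 2 * (\<theta> \<bullet> \<gamma>)"
    using cn tt by (simp add: cpair_def field_simps inner_commute)
  have gt: "\<theta> \<bullet> \<gamma> \<noteq> 0" using nrel n1 tt by auto
  have gC: "\<gamma> \<in> C" using Cstep[OF g gt] .
  have mgC: "-\<gamma> \<in> C" using Cstep[OF neg_in[OF g]] gt by simp
  have st: "\<theta> \<bullet> s = - (\<theta> \<bullet> \<gamma>)" unfolding s_eq using nrel by (simp add: inner_add_right)
  have sC: "s \<in> C" using Cstep[OF sP] st gt by simp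
  have hs: "nonneg_comb \<Delta> (\<theta> - s)" using hi[OF sC] .
  have hg: "nonneg_comb \<Delta> (\<theta> + \<gamma>)" using hi[OF mgC] by simp
  have g0: "\<gamma> \<noteq> 0" using g zero_not by auto
  have gnp: "\<not> nonneg_comb \<Delta> \<gamma>"
  proof
    assume gp: "nonneg_comb \<Delta> \<gamma>"
    have "nonneg_comb \<Delta> (\<gamma> + of_int (n - 1) *\<^sub>R \<theta>)" using gp tpos n1 by (intro nc_add nc_scale) auto
    moreover have "\<gamma> + of_int (n - 1) *\<^sub>R \<theta> = - (\<theta> - s)" unfolding s_eq by (simp add: algebra_simps)
    ultimately have "\<theta> - s = 0" using antisym[OF hs] by metis
    hence "-\<gamma> = of_int (n - 1) *\<^sub>R \<theta>" unfolding s_eq by (simp add: algebra_simps)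
    moreover have "nonneg_comb \<Delta> (of_int (n - 1) *\<^sub>R \<theta>)" using tpos n1 by (intro nc_scale) auto
    ultimately have "nonneg_comb \<Delta> (-\<gamma>)" by metis
    hence "\<gamma> = 0" using antisym gp by simp
    thus False using g0 by simp
  qed
  hence gnpr: "\<gamma> \<notin> pos_roots \<Phi> \<Delta>" by (simp add: pos_roots_def)
  have n_eq: "n = 1"
  proof (rule ccontr)
    assume "n \<noteq> 1"
    hence n2: "n \<ge> 2" using n1 by simp
    have "nonneg_comb \<Delta> ((\<theta> + \<gamma>) + of_int (n - 2) *\<^sub>R \<theta>)" using n2 by (intro nc_add[OF hg] nc_scale[OF tpos]) auto
    moreover have "(\<theta> + \<gamma>) + of_int (n - 2) *\<^sub>R \<theta> = - (\<theta> - s)" unfolding s_eq by (simp add: algebra_simps scaleR_2[symmetric])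
    ultimately have "\<theta> - s = 0" using antisym[OF hs] by metis
    hence ge: "\<gamma> = of_int (1 - n) *\<^sub>R \<theta>" unfolding s_eq by (simp add: algebra_simps)
    hence "real_of_int (1 - n) = 1 \<or> real_of_int (1 - n) = -1" using reduced[OF tP, of "real_of_int (1 - n)"] g by blast
    hence "n = 2" using n2 by linarith
    hence "\<gamma> = -\<theta>" using ge by simp
    thus False using ne by simp
  qed
  have s_eq1: "s = \<gamma> + \<theta>" using s_eq n_eq by simp
  have spr: "s \<in> pos_roots \<Phi> \<Delta>" using sP hg s_eq1 by (simp add: pos_roots_def add.commute)
  have N: "pair \<mu> s = pair \<mu> \<gamma> + pair \<mu> \<theta>" using s_eq1 N_add[OF g tP] by simp
  have chi': "w (-\<theta>) \<in> pos_roots \<Phi> \<Delta> \<Longrightarrow> w s \<in> pos_roots \<Phi> \<Delta> \<Longrightarrow> w \<gamma> \<in> pos_roots \<Phi> \<Delta>"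
    using w_pos_add[OF w g, of s 1 "-\<theta>"] s_eq1 by simp
  have L: "- pair \<mu> \<theta> - (if w (-\<theta>) \<in> pos_roots \<Phi> \<Delta> then 1 else 0) = 0"
    using l0 mtnp N_neg[OF tP, of \<mu>] by (simp add: ell_eq)
  show ?thesis unfolding s_def[symmetric]
    using L N chi' spr gnpr by (cases "w (-\<theta>) \<in> pos_roots \<Phi> \<Delta>") (auto simp: ell_eq)
qed


lemma hr_in:
  assumes h: "highest_root \<Phi> \<Delta> \<theta>" shows "\<theta> \<in> \<Phi>"
proof -
  obtain C where CC: "C \<in> components \<Phi>" and tC: "\<theta> \<in> C"
    using h unfolding highest_root_def by blast
  obtain a where aP: "a \<in> \<Phi>" and Ca: "C = (nonorth \<Phi>)\<^sup>* `` {a}"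
    using CC unfolding components_def by blast
  have "(a, \<theta>) \<in> (nonorth \<Phi>)\<^sup>*" using tC Ca by blast
  thus ?thesis
    by (cases rule: rtranclE) (use aP in \<open>auto simp: nonorth_def\<close>)
qed

lemma main_aux:
  assumes w: "w \<in> weyl_group \<Phi>"
    and vLP: "v \<in> LP pair \<Phi> \<Delta> (w, \<mu>)"
    and aff: "(\<alpha>, k) \<in> aff_simple \<Phi> \<Delta>"
    and l0: "ell pair \<Phi> \<Delta> (w, \<mu>) \<alpha> = 0"
    and a0: "inv v \<alpha> \<in> pos_roots \<Phi> \<Delta>"
  shows "refl \<alpha> \<circ> v \<in> LP pair \<Phi> \<Delta> (w, \<mu>)"
proof -
  have vW: "v \<in> weyl_group \<Phi>" and vpos: "\<And>\<beta>. \<beta> \<in> pos_roots \<Phi> \<Delta> \<Longrightarrow> ell pair \<Phi> \<Delta> (w,\<mu>) (v \<beta>) \<ge> 0"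
    using vLP unfolding LP_def by auto
  have affc: "\<alpha> \<in> \<Delta> \<or> (\<exists>\<theta>. \<alpha> = -\<theta> \<and> highest_root \<Phi> \<Delta> \<theta>)"
    using aff unfolding aff_simple_def by blast
  have aP: "\<alpha> \<in> \<Phi>" using affc DsubP hr_in neg_in by blast
  have vp: "linear v" "bij v" "\<forall>\<beta>\<in>\<Phi>. v \<beta> \<in> \<Phi>" using weyl_props[OF vW RS] by auto
  define \<alpha>0 where "\<alpha>0 = inv v \<alpha>"
  have va0: "v \<alpha>0 = \<alpha>" unfolding \<alpha>0_def using vp(2) by (simp add: bij_is_surj surj_f_inv_f)
  have a0p: "nonneg_comb \<Delta> \<alpha>0" using a0 unfolding \<alpha>0_def pos_roots_def by simp
  have vimg: "v ` \<Phi> = \<Phi>"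
    using endo_inj_surj[OF fin, of v] vp(2,3) bij_is_inj inj_on_subset by blast
  have "\<forall>\<beta>0\<in>pos_roots \<Phi> \<Delta>. ell pair \<Phi> \<Delta> (w,\<mu>) ((refl \<alpha> \<circ> v) \<beta>0) \<ge> 0"
  proof
    fix \<beta>0 assume b0: "\<beta>0 \<in> pos_roots \<Phi> \<Delta>"
    define \<gamma> where "\<gamma> = v \<beta>0"
    have gP: "\<gamma> \<in> \<Phi>" using b0 vp(3) unfolding \<gamma>_def pos_roots_def by auto
    have lg: "ell pair \<Phi> \<Delta> (w,\<mu>) \<gamma> \<ge> 0" using vpos[OF b0] unfolding \<gamma>_def .
    obtain n where cn: "cpair \<alpha> \<gamma> = of_int n" using cpair_int[OF aP gP] by blast
    have "ell pair \<Phi> \<Delta> (w,\<mu>) (refl \<alpha> \<gamma>) \<ge> 0"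
    proof (cases "\<gamma> = \<alpha>")
      case True
      have "\<alpha> \<noteq> 0" using aP zero_not by auto
      hence "refl \<alpha> \<alpha> = -\<alpha>" unfolding refl_def by (simp add: scaleR_2)
      thus ?thesis using True ell_neg[OF w aP, of \<mu>] l0 by simp
    next
      case ne: False
      show ?thesis
      proof (cases "n \<le> 0")
        case True
        define r where "r = \<beta>0 + of_int (-n) *\<^sub>R \<alpha>0"
        have "v r = \<gamma> + of_int (-n) *\<^sub>R \<alpha>" unfolding r_def \<gamma>_def using vp(1) va0
          by (simp add: linear_add linear_scale linear_diff)
        also have "\<dots> = refl \<alpha> \<gamma>" unfolding refl_cpair cn by simp
        finally have vr: "v r = refl \<alpha> \<gamma>" .
        have "refl \<alpha> \<gamma> \<in> v ` \<Phi>" using refl_in[OF aP gP] vimg by simp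
        then obtain \<rho> where \<rho>: "\<rho> \<in> \<Phi>" "v \<rho> = refl \<alpha> \<gamma>" by (metis imageE)
        have "\<rho> = r" using \<rho>(2) vr vp(2) by (metis bij_is_inj injD)
        moreover have "nonneg_comb \<Delta> r" unfolding r_def using b0 a0p True
          by (intro nc_add nc_scale) (auto simp: pos_roots_def)
        ultimately have "\<rho> \<in> pos_roots \<Phi> \<Delta>" using \<rho>(1) by (simp add: pos_roots_def)
        thus ?thesis using vpos \<rho>(2) by metis
      next
        case False
        hence n1: "n \<ge> 1" by simp
        from affc show ?thesis
        proof
          assume "\<alpha> \<in> \<Delta>"
          from mono_simple[OF w this l0 gP ne cn n1] lg show ?thesis by simp
        next
          assume "\<exists>\<theta>. \<alpha> = -\<theta> \<and> highest_root \<Phi> \<Delta> \<theta>"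
          then obtain \<theta> where th: "\<alpha> = -\<theta>" "highest_root \<Phi> \<Delta> \<theta>" by blast
          have "ell pair \<Phi> \<Delta> (w,\<mu>) \<gamma> \<le> ell pair \<Phi> \<Delta> (w,\<mu>) (refl (-\<theta>) \<gamma>)"
            using mono_theta[OF w th(2), of \<mu> \<gamma> n] l0 gP ne cn n1 th(1) by simp
          thus ?thesis using lg th(1) by simp
        qed
      qed
    qed
    thus "ell pair \<Phi> \<Delta> (w,\<mu>) ((refl \<alpha> \<circ> v) \<beta>0) \<ge> 0" unfolding \<gamma>_def by simp
  qed
  moreover have "refl \<alpha> \<circ> v \<in> weyl_group \<Phi>" using vW aP by (rule weyl_step)
  ultimately show ?thesis unfolding LP_def by blast
qed

end

theorem corollary4p6:
  fixes \<Phi> \<Delta> :: "'v::real_inner set"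
    and emb :: "'v \<Rightarrow> 'x::ab_group_add"
    and pair :: "'x \<Rightarrow> 'v \<Rightarrow> int"
    and w v :: "'v \<Rightarrow> 'v" and \<mu> :: 'x and \<alpha> :: 'v and k :: int
  assumes "root_system \<Phi>"
    and "is_basis \<Phi> \<Delta>"
    and "cochar_data \<Phi> emb pair"
    and "w \<in> weyl_group \<Phi>"
    and "v \<in> LP pair \<Phi> \<Delta> (w, \<mu>)"
    and "(\<alpha>, k) \<in> aff_simple \<Phi> \<Delta>"
    and "ell pair \<Phi> \<Delta> (w, \<mu>) \<alpha> = 0"
    and "inv v \<alpha> \<in> pos_roots \<Phi> \<Delta>"
  shows "refl \<alpha> \<circ> v \<in> LP pair \<Phi> \<Delta> (w, \<mu>)"
  by (rule main_aux[OF assms(1) assms(2) assms(3) assms(4) assms(5) assms(6) assms(7) assms(8)])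

end
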